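(* Let $\mathcal{I}$ be an ideal on $\omega$. Then (1) $\mathrm{FIN}\otimes\mathcal{I}\notin P^-$, and (2) $\rho^{(\mathrm{FIN}\otimes\mathcal{I})}\in P^-$ (for any choice of almost disjoint family $\mathcal{A}$ and enumeration of $(\mathrm{FIN}\otimes\mathcal{I})^+$ in its definition).
   Context: An ideal on a set $X$: $\mathcal{J}\subseteq\mathcal{P}(X)$ with $\emptyset\in\mathcal{J}$, $X\notin\mathcal{J}$, closed under finite unions and subsets, containing all finite sets; $\mathcal{J}^+=\mathcal{P}(X)\setminus\mathcal{J}$. $\mathrm{FIN}\otimes\mathcal{I}$ is the ideal on $\omega\times\omega$: $A\in\mathrm{FIN}\otimes\mathcal{I}$ iff $\{n:\{k:(n,k)\in A\}\notin\mathcal{I}\}$ is finite. Definition of $\rho^{(\mathrm{FIN}\otimes\mathcal{I})}$: let $\mathcal{A}=\{A_\alpha:\alpha<\mathfrak{c}\}$ be an almost disjoint family on $\omega$ (pairwise distinct infinite subsets of $\omega$ with pairwise finite intersections), $(\mathrm{FIN}\otimes\mathcal{I})^+=\{B_\alpha:\alpha<\mathfrak{c}\}$ an enumeration, $P_n=\{n\}\times\omega$, $\overline{\mathcal{A}}=\{A\setminus K:A\in\mathcal{A},K\in[\omega]^{<\omega}\}$, and $\rho^{(\mathrm{FIN}\otimes\mathcal{I})}\colon\overline{\mathcal{A}}\to[\omega\times\omega]^\omega$, $\rho^{(\mathrm{FIN}\otimes\mathcal{I})}(A_\alpha\setminus K)=B_\alpha\setminus\bigcup\{P_n:n<\max(K\cap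 A_\alpha)\}$, with $\max\emptyset=0$. This is a partition regular function (domain $\overline{\mathcal{A}}\subseteq[\omega]^\omega$, values in $[\omega\times\omega]^\omega$) with $\mathcal{I}_{\rho}=\mathrm{FIN}\otimes\mathcal{I}$. For a function $\rho\colon\mathcal{F}\to[\Lambda]^\omega$, $\mathcal{F}\subseteq[\Omega]^\omega$, let $\mathcal{I}_\rho=\{A\subseteq\Lambda:\forall F\in\mathcal{F}\ \rho(F)\not\subseteq A\}$; $\rho\in P^-$ means: for every decreasing $A_0\supseteq A_1\supseteq\dots$ of subsets of $\Lambda$ with $A_0\notin\mathcal{I}_\rho$ and $A_n\setminus A_{n+1}\in\mathcal{I}_\rho$ for all $n$, there is $F\in\mathcal{F}$ with $\rho(F)\subseteq A_0$ such that for each $n$ some finite $K\subseteq\Omega$ has $\rho(F\setminus K)\subseteq A_n$. For an ideal $\mathcal{J}$ on $\Lambda$, $\mathcal{J}\in P^-$ means: for every decreasing $A_0\supseteq A_1\supseteq\dots$ with $A_0\in\mathcal{J}^+$ and $A_n\setminus A_{n+1}\in\mathcal{J}$ there is $B\in\mathcal{J}^+$, $B\subseteq A_0$, with $B\setminus A_n$ finite for each $n$. *)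

theory Defs
  imports Main
begin

definition ideal_on :: "'a set \<Rightarrow> 'a set set \<Rightarrow> bool" where
  "ideal_on X J \<longleftrightarrow> J \<subseteq> Pow X \<and> {} \<in> J \<and> X \<notin> J
     \<and> (\<forall>A\<in>J. \<forall>B\<in>J. A \<union> B \<in> J)
     \<and> (\<forall>A\<in>J. \<forall>B. B \<subseteq> A \<longrightarrow> B \<in> J)
     \<and> (\<forall>F. F \<subseteq> X \<and> finite F \<longrightarrow> F \<in> J)"

definition positive :: "'a set set \<Rightarrow> 'a set set" where
  "positive J = UNIV - J"

definition FIN_tensor :: "nat set set \<Rightarrow> (nat \<times> nat) set set" where
  "FIN_tensor I = {A. finite {n. {k. (n, k) \<in> A} \<notin> I}}"

definition Pminus_ideal :: "'a set set \<Rightarrow> bool" where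
  "Pminus_ideal J \<longleftrightarrow>
    (\<forall>A :: nat \<Rightarrow> 'a set.
       (\<forall>n. A (Suc n) \<subseteq> A n) \<and> A 0 \<notin> J \<and> (\<forall>n. A n - A (Suc n) \<in> J)
       \<longrightarrow> (\<exists>B. B \<notin> J \<and> B \<subseteq> A 0 \<and> (\<forall>n. finite (B - A n))))"

definition I_rho :: "'a set set \<Rightarrow> ('a set \<Rightarrow> 'b set) \<Rightarrow> 'b set set" where
  "I_rho Fam rho = {A. \<forall>F\<in>Fam. \<not> rho F \<subseteq> A}"

definition Pminus_fun :: "'a set set \<Rightarrow> ('a set \<Rightarrow> 'b set) \<Rightarrow> bool" where
  "Pminus_fun Fam rho \<longleftrightarrow>
    (\<forall>A :: nat \<Rightarrow> 'b set.
       (\<forall>n. A (Suc n) \<subseteq> A n) \<and> A 0 \<notin> I_rho Fam rho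
       \<and> (\<forall>n. A n - A (Suc n) \<in> I_rho Fam rho)
       \<longrightarrow> (\<exists>F\<in>Fam. rho F \<subseteq> A 0 \<and>
              (\<forall>n. \<exists>K. finite K \<and> rho (F - K) \<subseteq> A n)))"

definition almost_disjoint_family :: "('k \<Rightarrow> nat set) \<Rightarrow> bool" where
  "almost_disjoint_family A \<longleftrightarrow> inj A \<and> (\<forall>a. infinite (A a))
     \<and> (\<forall>a b. a \<noteq> b \<longrightarrow> finite (A a \<inter> A b))"

definition Abar :: "('k \<Rightarrow> nat set) \<Rightarrow> nat set set" where
  "Abar A = {A a - K | a K. finite K}"

definition max0 :: "nat set \<Rightarrow> nat" where
  "max0 S = (if S = {} then 0 else Max S)"

definition column :: "nat \<Rightarrow> (nat \<times> nat) set" where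
  "column n = {n} \<times> UNIV"

text \<open>rho(A_alpha - K) = B_alpha - U{P_n : n < max(K cap A_alpha)}. Note
  K cap A_alpha = A_alpha - (A_alpha - K), so the value depends only on the set F.\<close>
definition rho_FIN :: "('k \<Rightarrow> nat set) \<Rightarrow> ('k \<Rightarrow> (nat \<times> nat) set) \<Rightarrow> nat set \<Rightarrow> (nat \<times> nat) set" where
  "rho_FIN A B F =
     (let a = (THE a. \<exists>K. finite K \<and> F = A a - K)
      in B a - \<Union>{column n | n. n < max0 (A a - F)})"

end

theory Submission
  imports Defs
begin

definition sec :: "(nat \<times> nat) set \<Rightarrow> nat \<Rightarrow> nat set" where
  "sec X m = {k. (m, k) \<in> X}"

lemma FT_iff: "X \<in> FIN_tensor I \<longleftrightarrow> finite {m. sec X m \<notin> I}"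
  by (simp add: FIN_tensor_def sec_def)

lemma ideal_facts:
  assumes "ideal_on UNIV I"
  shows "UNIV \<notin> I" "finite F \<Longrightarrow> F \<in> I" "X \<in> I \<Longrightarrow> Y \<in> I \<Longrightarrow> X \<union> Y \<in> I"
    "X \<in> I \<Longrightarrow> Y \<subseteq> X \<Longrightarrow> Y \<in> I"
  using assms unfolding ideal_on_def by blast+

lemma FT_sub:
  assumes "ideal_on UNIV I" "X \<in> FIN_tensor I" "Y \<subseteq> X"
  shows "Y \<in> FIN_tensor I"
proof -
  have "{m. sec Y m \<notin> I} \<subseteq> {m. sec X m \<notin> I}"
    using ideal_facts(4)[OF assms(1)] assms(3) unfolding sec_def by blast
  then show ?thesis using assms(2) FT_iff finite_subset by metis
qed

lemma FT_un:
  assumes "ideal_on UNIV I" "X \<in> FIN_tensor I" "Y \<in> FIN_tensor I"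
  shows "X \<union> Y \<in> FIN_tensor I"
proof -
  have "sec (X \<union> Y) m = sec X m \<union> sec Y m" for m unfolding sec_def by auto
  then have "{m. sec (X \<union> Y) m \<notin> I} \<subseteq> {m. sec X m \<notin> I} \<union> {m. sec Y m \<notin> I}"
    using ideal_facts(3)[OF assms(1)] by auto
  then show ?thesis using assms(2,3) FT_iff finite_subset by (metis finite_Un)
qed

lemma part1:
  assumes I: "ideal_on UNIV I"
  shows "\<not> Pminus_ideal (FIN_tensor I)"
proof
  assume P: "Pminus_ideal (FIN_tensor I)"
  define A :: "nat \<Rightarrow> (nat \<times> nat) set" where "A n = {p. fst p \<ge> n}" for n
  have 1: "\<forall>n. A (Suc n) \<subseteq> A n" unfolding A_def by auto
  have "sec (A 0) m = UNIV" for m unfolding A_def sec_def by auto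
  then have 2: "A 0 \<notin> FIN_tensor I" using ideal_facts(1)[OF I] FT_iff by auto
  have 3: "A n - A (Suc n) \<in> FIN_tensor I" for n
  proof -
    have "{m. sec (A n - A (Suc n)) m \<notin> I} \<subseteq> {n}"
    proof
      fix m assume "m \<in> {m. sec (A n - A (Suc n)) m \<notin> I}"
      moreover have "m \<noteq> n \<Longrightarrow> sec (A n - A (Suc n)) m = {}" unfolding A_def sec_def by auto
      ultimately show "m \<in> {n}" using ideal_facts(2)[OF I, of "{}"] by (cases "m = n") auto
    qed
    then show ?thesis using FT_iff finite_subset by blast
  qed
  obtain Bs where B: "Bs \<notin> FIN_tensor I" "\<forall>n. finite (Bs - A n)"
    using P 1 2 3 unfolding Pminus_ideal_def by blast
  then have "infinite {m. sec Bs m \<notin> I}" using FT_iff by blast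
  then obtain m where m: "sec Bs m \<notin> I" using not_finite_existsD by blast
  then have inf: "infinite (sec Bs m)" using ideal_facts(2)[OF I] by blast
  have "Pair m ` sec Bs m \<subseteq> Bs - A (Suc m)" unfolding sec_def A_def by auto
  moreover have "infinite (Pair m ` sec Bs m)"
    using inf finite_imageD inj_on_def by (metis Pair_inject)
  ultimately show False using B(2) finite_subset by blast
qed


lemma inf_ge: "infinite (S::nat set) \<Longrightarrow> \<exists>x\<in>S. x \<ge> n"
  using finite_nat_set_iff_bounded_le by (meson nat_le_linear)

lemma THE_a:
  assumes ad: "almost_disjoint_family A" and K: "finite K"
  shows "(THE a'. \<exists>K'. finite K' \<and> A a - K = A a' - K') = a"
proof (rule the_equality)
  show "\<exists>K'. finite K' \<and> A a - K = A a - K'" using K by blast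
next
  fix b assume "\<exists>K'. finite K' \<and> A a - K = A b - K'"
  then obtain K' where eq: "A a - K = A b - K'" by blast
  show "b = a"
  proof (rule ccontr)
    assume "b \<noteq> a"
    then have f: "finite (A a \<inter> A b)" using ad unfolding almost_disjoint_family_def by metis
    have "A a \<subseteq> (A a \<inter> A b) \<union> K" using eq by blast
    then have "finite (A a)" using f K finite_subset by blast
    then show False using ad unfolding almost_disjoint_family_def by blast
  qed
qed

lemma rho_eq:
  assumes ad: "almost_disjoint_family A" and K: "finite K"
  shows "rho_FIN A B (A a - K) = B a - \<Union>{column n | n. n < max0 (A a - (A a - K))}"
  unfolding rho_FIN_def Let_def using THE_a[OF ad K] by simp

lemma remove_cols:
  assumes I: "ideal_on UNIV I" and X: "X \<notin> FIN_tensor I"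
  shows "X - \<Union>{column n | n. n < c} \<notin> FIN_tensor I"
proof
  assume "X - \<Union>{column n | n. n < c} \<in> FIN_tensor I"
  then have f: "finite {m. sec (X - \<Union>{column n | n. n < c}) m \<notin> I}" using FT_iff by blast
  have "{m. sec X m \<notin> I} \<subseteq> {m. sec (X - \<Union>{column n | n. n < c}) m \<notin> I} \<union> {..<c}"
  proof
    fix m assume "m \<in> {m. sec X m \<notin> I}"
    moreover have "m \<ge> c \<Longrightarrow> sec (X - \<Union>{column n | n. n < c}) m = sec X m"
      unfolding sec_def column_def by auto
    ultimately show "m \<in> {m. sec (X - \<Union>{column n | n. n < c}) m \<notin> I} \<union> {..<c}"
      by (cases "m < c") auto
  qed
  then have "finite {m. sec X m \<notin> I}" using f finite_subset by blast
  then show False using X FT_iff by blast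
qed

lemma I_rho_iff:
  assumes I: "ideal_on UNIV I" and ad: "almost_disjoint_family A"
    and bij: "bij_betw B UNIV (positive (FIN_tensor I))"
  shows "X \<in> I_rho (Abar A) (rho_FIN A B) \<longleftrightarrow> X \<in> FIN_tensor I"
proof
  assume X: "X \<in> I_rho (Abar A) (rho_FIN A B)"
  show "X \<in> FIN_tensor I"
  proof (rule ccontr)
    assume "X \<notin> FIN_tensor I"
    then have "X \<in> positive (FIN_tensor I)" unfolding positive_def by blast
    then obtain a where a: "B a = X" using bij unfolding bij_betw_def by (metis rangeE)
    have "A a - {} \<in> Abar A" unfolding Abar_def by blast
    moreover have "rho_FIN A B (A a - {}) = X" using rho_eq[OF ad, of "{}" B a] a
      by (simp add: max0_def)
    ultimately show False using X unfolding I_rho_def by blast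
  qed
next
  assume X: "X \<in> FIN_tensor I"
  show "X \<in> I_rho (Abar A) (rho_FIN A B)"
    unfolding I_rho_def
  proof (intro CollectI ballI notI)
    fix F assume "F \<in> Abar A" "rho_FIN A B F \<subseteq> X"
    then obtain a K where F: "F = A a - K" "finite K" unfolding Abar_def by blast
    have "B a \<notin> FIN_tensor I" using bij unfolding bij_betw_def positive_def by auto
    then have "rho_FIN A B F \<notin> FIN_tensor I"
      using rho_eq[OF ad F(2), of B a] F(1) remove_cols[OF I] by simp
    then show False using FT_sub[OF I X] \<open>rho_FIN A B F \<subseteq> X\<close> by blast
  qed
qed

lemma part2:
  assumes I: "ideal_on UNIV I" and ad: "almost_disjoint_family A"
    and bij: "bij_betw B UNIV (positive (FIN_tensor I))"
  shows "Pminus_fun (Abar A) (rho_FIN A B)"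
  unfolding Pminus_fun_def
proof (intro allI impI)
  fix C :: "nat \<Rightarrow> (nat \<times> nat) set"
  assume "(\<forall>n. C (Suc n) \<subseteq> C n) \<and> C 0 \<notin> I_rho (Abar A) (rho_FIN A B)
       \<and> (\<forall>n. C n - C (Suc n) \<in> I_rho (Abar A) (rho_FIN A B))"
  then have dec: "\<And>n. C (Suc n) \<subseteq> C n" and C0: "C 0 \<notin> FIN_tensor I"
    and Cd: "\<And>n. C n - C (Suc n) \<in> FIN_tensor I"
    using I_rho_iff[OF I ad bij] by auto
  have mono: "m \<le> n \<Longrightarrow> C n \<subseteq> C m" for m n
    using dec by (metis lift_Suc_antimono_le)
  have diff: "C 0 - C n \<in> FIN_tensor I" for n
  proof (induction n)
    case 0 then show ?case using FT_sub[OF I Cd[of 0]] by auto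
  next
    case (Suc n)
    have "C 0 - C (Suc n) \<subseteq> (C 0 - C n) \<union> (C n - C (Suc n))" by blast
    then show ?case using FT_sub[OF I FT_un[OF I Suc Cd[of n]]] by blast
  qed
  have Cpos: "C n \<notin> FIN_tensor I" for n
  proof
    assume "C n \<in> FIN_tensor I"
    then have "C n \<union> (C 0 - C n) \<in> FIN_tensor I" using FT_un[OF I _ diff] by blast
    then show False using FT_sub[OF I _, of _ "C 0"] C0 by blast
  qed
  have "\<exists>c. c \<ge> n \<and> sec (C n) c \<notin> I" for n
  proof -
    have "infinite {m. sec (C n) m \<notin> I}" using Cpos FT_iff by blast
    then show ?thesis using inf_ge by blast
  qed
  then obtain c where c: "\<And>n. c n \<ge> n" "\<And>n. sec (C n) (c n) \<notin> I" by metis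
  define D where "D = (\<Union>n. C n \<inter> column (c n))"
  have "D \<notin> FIN_tensor I"
  proof
    assume "D \<in> FIN_tensor I"
    then have f: "finite {m. sec D m \<notin> I}" using FT_iff by blast
    have "range c \<subseteq> {m. sec D m \<notin> I}"
    proof
      fix m assume "m \<in> range c"
      then obtain n where n: "m = c n" by blast
      have "sec (C n) (c n) \<subseteq> sec D (c n)" unfolding sec_def D_def column_def by auto
      then show "m \<in> {m. sec D m \<notin> I}" using c(2)[of n] ideal_facts(4)[OF I] n by blast
    qed
    then have "finite (range c)" using f finite_subset by blast
    then obtain M where M: "\<forall>x\<in>range c. x \<le> M" using finite_nat_set_iff_bounded_le by blast
    have "c (Suc M) \<le> M" using M by simp
    then show False using c(1)[of "Suc M"] by linarith
  qed
  then have "D \<in> positive (FIN_tensor I)" unfolding positive_def by blast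
  then obtain a where a: "B a = D" using bij unfolding bij_betw_def by (metis rangeE)
  have Fin: "A a - {} \<in> Abar A" unfolding Abar_def by blast
  have r0: "rho_FIN A B (A a - {}) = D" using rho_eq[OF ad, of "{}" B a] a
    by (simp add: max0_def)
  have DC0: "D \<subseteq> C 0" unfolding D_def using mono by blast
  have "\<exists>K. finite K \<and> rho_FIN A B (A a - {} - K) \<subseteq> C n" for n
  proof -
    define M where "M = Suc (Max (c ` {..<n}))"
    have DM: "D - C n \<subseteq> \<Union>{column m | m. m < M}"
    proof
      fix p assume p: "p \<in> D - C n"
      then obtain j where j: "p \<in> C j" "p \<in> column (c j)" unfolding D_def by blast
      have "j < n" using p j mono[of n j] by (cases "j < n") auto
      then have "c j \<le> Max (c ` {..<n})" by (intro Max_ge) auto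
      then have "c j < M" unfolding M_def by simp
      then show "p \<in> \<Union>{column m | m. m < M}" using j by blast
    qed
    have "infinite (A a)" using ad unfolding almost_disjoint_family_def by blast
    then obtain k where k: "k \<in> A a" "k \<ge> M" using inf_ge by blast
    have "A a - (A a - {k}) = {k}" using k by blast
    then have "rho_FIN A B (A a - {} - {k}) = D - \<Union>{column m | m. m < k}"
      using rho_eq[OF ad, of "{k}" B a] a by (simp add: max0_def)
    also have "\<dots> \<subseteq> C n"
    proof
      fix p assume p: "p \<in> D - \<Union>{column m | m. m < k}"
      show "p \<in> C n"
      proof (rule ccontr)
        assume "p \<notin> C n"
        then have "p \<in> \<Union>{column m | m. m < M}" using DM p by blast
        then obtain m where "m < M" "p \<in> column m" by blast
        then have "p \<in> \<Union>{column m | m. m < k}" using k(2) by (intro UnionI[of "column m"]) auto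
        then show False using p by blast
      qed
    qed
    finally show ?thesis by (intro exI[of _ "{k}"]) simp
  qed
  then have ex: "\<forall>n. \<exists>K. finite K \<and> rho_FIN A B (A a - {} - K) \<subseteq> C n" by blast
  show "\<exists>F\<in>Abar A. rho_FIN A B F \<subseteq> C 0 \<and> (\<forall>n. \<exists>K. finite K \<and> rho_FIN A B (F - K) \<subseteq> C n)"
  proof (rule bexI[OF _ Fin], intro conjI)
    show "rho_FIN A B (A a - {}) \<subseteq> C 0" using r0 DC0 by simp
    show "\<forall>n. \<exists>K. finite K \<and> rho_FIN A B (A a - {} - K) \<subseteq> C n" using ex .
  qed
qed

theorem proposition5p3:
  fixes I :: "nat set set"
    and A :: "'k \<Rightarrow> nat set"
    and B :: "'k \<Rightarrow> (nat \<times> nat) set"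
  assumes "ideal_on UNIV I"
  shows "\<not> Pminus_ideal (FIN_tensor I)
    \<and> (almost_disjoint_family A \<and> bij_betw B UNIV (positive (FIN_tensor I))
        \<longrightarrow> Pminus_fun (Abar A) (rho_FIN A B))"
  using part1[OF assms] part2[OF assms] by blast

end
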